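(* Let $\mathbb X=\langle\omega_1,\rho\rangle$ and $\mathbb Y=\langle\omega_1,\sigma\rangle$, where $\rho$ is the equivalence relation with classes $2=\{0,1\}$, $\omega\setminus2$, and $\{\alpha\}$ for $\omega\le\alpha<\omega_1$; and $\sigma$ is the equivalence relation with classes $\{n\}$ for $n\in\omega$ and $\omega_1\setminus\omega$. Then $\mathbb X\equiv_{\mathcal P_{\infty\omega}}\mathbb Y$, $\mathbb X\not\equiv\mathbb Y$, and $\mathbb X\not\sim_c\mathbb Y$.
   Context: The language has one binary relation symbol $R$. A condensation from $\langle X,\rho\rangle$ onto $\langle Y,\sigma\rangle$ is a bijection $F:X\to Y$ with $x\,\rho\,x'\Rightarrow F(x)\,\sigma\,F(x')$; $\mathbb X\sim_c\mathbb Y$ means condensations exist in both directions. $\equiv$ is first order elementary equivalence. $\mathcal P_0$ consists of all atomic formulas ($v_\alpha=v_\beta$, $R(v_\alpha,v_\beta)$) and all $\neg\,v_\alpha=v_\beta$; $\mathcal P_{\infty\omega}$ is the closure of $\mathcal P_0$ under $\forall v$, $\exists v$ and conjunctions and disjunctions of arbitrary sets of formulas (no negation); $\equiv_{\mathcal P_{\infty\omega}}$ means satisfying the same $\mathcal P_{\infty\omega}$-sentences. *)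

theory Defs
  imports Main
begin

text \<open>A structure for the language with one binary relation symbol R is a pair
  (A, r) with carrier A and interpretation r (only its values on A matter).\<close>

definition condensation ::
  "'a set \<Rightarrow> ('a \<Rightarrow> 'a \<Rightarrow> bool) \<Rightarrow> 'b set \<Rightarrow> ('b \<Rightarrow> 'b \<Rightarrow> bool) \<Rightarrow> ('a \<Rightarrow> 'b) \<Rightarrow> bool" where
  "condensation A r B s F \<longleftrightarrow>
     bij_betw F A B \<and> (\<forall>x\<in>A. \<forall>x'\<in>A. r x x' \<longrightarrow> s (F x) (F x'))"

definition condensable :: "'a set \<Rightarrow> ('a \<Rightarrow> 'a \<Rightarrow> bool) \<Rightarrow> 'b set \<Rightarrow> ('b \<Rightarrow> 'b \<Rightarrow> bool) \<Rightarrow> bool" where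
  "condensable A r B s \<longleftrightarrow> (\<exists>F. condensation A r B s F)"

definition bicondensable :: "'a set \<Rightarrow> ('a \<Rightarrow> 'a \<Rightarrow> bool) \<Rightarrow> 'b set \<Rightarrow> ('b \<Rightarrow> 'b \<Rightarrow> bool) \<Rightarrow> bool" where
  "bicondensable A r B s \<longleftrightarrow> condensable A r B s \<and> condensable B s A r"

datatype fo = FEq nat nat | FRel nat nat | FNot fo | FAnd fo fo | FEx nat fo

primrec fo_fv :: "fo \<Rightarrow> nat set" where
  "fo_fv (FEq i j) = {i, j}"
| "fo_fv (FRel i j) = {i, j}"
| "fo_fv (FNot p) = fo_fv p"
| "fo_fv (FAnd p q) = fo_fv p \<union> fo_fv q"
| "fo_fv (FEx i p) = fo_fv p - {i}"

primrec fo_sat :: "'a set \<Rightarrow> ('a \<Rightarrow> 'a \<Rightarrow> bool) \<Rightarrow> (nat \<Rightarrow> 'a) \<Rightarrow> fo \<Rightarrow> bool" where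
  "fo_sat A r s (FEq i j) \<longleftrightarrow> s i = s j"
| "fo_sat A r s (FRel i j) \<longleftrightarrow> r (s i) (s j)"
| "fo_sat A r s (FNot p) \<longleftrightarrow> \<not> fo_sat A r s p"
| "fo_sat A r s (FAnd p q) \<longleftrightarrow> fo_sat A r s p \<and> fo_sat A r s q"
| "fo_sat A r s (FEx i p) \<longleftrightarrow> (\<exists>a\<in>A. fo_sat A r (s(i := a)) p)"

definition fo_models :: "'a set \<Rightarrow> ('a \<Rightarrow> 'a \<Rightarrow> bool) \<Rightarrow> fo \<Rightarrow> bool" where
  "fo_models A r p \<longleftrightarrow> (\<forall>s. range s \<subseteq> A \<longrightarrow> fo_sat A r s p)"

definition elem_equiv :: "'a set \<Rightarrow> ('a \<Rightarrow> 'a \<Rightarrow> bool) \<Rightarrow> 'b set \<Rightarrow> ('b \<Rightarrow> 'b \<Rightarrow> bool) \<Rightarrow> bool" where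
  "elem_equiv A r B s \<longleftrightarrow>
     (\<forall>p. fo_fv p = {} \<longrightarrow> (fo_models A r p \<longleftrightarrow> fo_models B s p))"

text \<open>Variables range over the type 'v; a conjunction/disjunction of an arbitrary set of
  formulas is given by an index set I :: 'i set and a family f :: 'i \<Rightarrow> formula.
  Both 'v and 'i are arbitrary types (universally quantified in the theorem).\<close>

datatype ('v, 'i) pfm =
    PEq 'v 'v | PRel 'v 'v | PNeq 'v 'v
  | PAll 'v "('v, 'i) pfm" | PEx 'v "('v, 'i) pfm"
  | PConj "'i set" "'i \<Rightarrow> ('v, 'i) pfm" | PDisj "'i set" "'i \<Rightarrow> ('v, 'i) pfm"

primrec pfm_fv :: "('v, 'i) pfm \<Rightarrow> 'v set" where
  "pfm_fv (PEq i j) = {i, j}"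
| "pfm_fv (PRel i j) = {i, j}"
| "pfm_fv (PNeq i j) = {i, j}"
| "pfm_fv (PAll i p) = pfm_fv p - {i}"
| "pfm_fv (PEx i p) = pfm_fv p - {i}"
| "pfm_fv (PConj I f) = \<Union> ((pfm_fv \<circ> f) ` I)"
| "pfm_fv (PDisj I f) = \<Union> ((pfm_fv \<circ> f) ` I)"

primrec pfm_sat :: "'a set \<Rightarrow> ('a \<Rightarrow> 'a \<Rightarrow> bool) \<Rightarrow> ('v \<Rightarrow> 'a) \<Rightarrow> ('v, 'i) pfm \<Rightarrow> bool" where
  "pfm_sat A r s (PEq i j) \<longleftrightarrow> s i = s j"
| "pfm_sat A r s (PRel i j) \<longleftrightarrow> r (s i) (s j)"
| "pfm_sat A r s (PNeq i j) \<longleftrightarrow> s i \<noteq> s j"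
| "pfm_sat A r s (PAll i p) \<longleftrightarrow> (\<forall>a\<in>A. pfm_sat A r (s(i := a)) p)"
| "pfm_sat A r s (PEx i p) \<longleftrightarrow> (\<exists>a\<in>A. pfm_sat A r (s(i := a)) p)"
| "pfm_sat A r s (PConj I f) \<longleftrightarrow> (\<forall>k\<in>I. pfm_sat A r s (f k))"
| "pfm_sat A r s (PDisj I f) \<longleftrightarrow> (\<exists>k\<in>I. pfm_sat A r s (f k))"

definition pfm_models :: "'a set \<Rightarrow> ('a \<Rightarrow> 'a \<Rightarrow> bool) \<Rightarrow> ('v, 'i) pfm \<Rightarrow> bool" where
  "pfm_models A r p \<longleftrightarrow> (\<forall>s. range s \<subseteq> A \<longrightarrow> pfm_sat A r s p)"

definition pinf_equiv ::
  "'v itself \<Rightarrow> 'i itself \<Rightarrow> 'a set \<Rightarrow> ('a \<Rightarrow> 'a \<Rightarrow> bool) \<Rightarrow> 'b set \<Rightarrow> ('b \<Rightarrow> 'b \<Rightarrow> bool) \<Rightarrow> bool" where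
  "pinf_equiv _ _ A r B s \<longleftrightarrow>
     (\<forall>p :: ('v, 'i) pfm. pfm_fv p = {} \<longrightarrow> (pfm_models A r p \<longleftrightarrow> pfm_models B s p))"

text \<open>The carrier is \<omega>_1, given abstractly as a set W of cardinality \<aleph>_1 together with
  an injective enumeration e : \<omega> \<rightarrow> W of the finite ordinals (e n plays the role of n).\<close>

definition rho :: "(nat \<Rightarrow> 'a) \<Rightarrow> 'a set \<Rightarrow> 'a \<Rightarrow> 'a \<Rightarrow> bool" where
  "rho e W x y \<longleftrightarrow> x \<in> W \<and> y \<in> W \<and>
     (x = y \<or> (x \<in> e ` {0, 1} \<and> y \<in> e ` {0, 1}) \<or> (x \<in> e ` {2..} \<and> y \<in> e ` {2..}))"

definition sigma :: "(nat \<Rightarrow> 'a) \<Rightarrow> 'a set \<Rightarrow> 'a \<Rightarrow> 'a \<Rightarrow> bool" where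
  "sigma e W x y \<longleftrightarrow> x \<in> W \<and> y \<in> W \<and>
     (x = y \<or> (x \<in> W - range e \<and> y \<in> W - range e))"

end

theory Submission imports Defs "HOL-Library.Countable_Set" begin

context includes cardinal_syntax begin
lemma uncountable_W:
  assumes "(card_of W, cardSuc (card_of (UNIV :: nat set))) \<in> ordIso"
  shows "\<not> countable W"
proof
  assume "countable W"
  then obtain f :: "_ \<Rightarrow> nat" where "inj_on f W" unfolding countable_def by blast
  hence "|W| \<le>o |UNIV :: nat set|" using card_of_ordLeq by blast
  moreover have "|UNIV :: nat set| <o cardSuc |UNIV :: nat set|"
    by (rule cardSuc_greater) (rule card_of_Card_order)
  ultimately have "|W| <o cardSuc |UNIV :: nat set|" using ordLeq_ordLess_trans by blast
  thus False using assms not_ordLess_ordIso by blast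
qed
end

lemma fresh: "infinite S \<Longrightarrow> finite F \<Longrightarrow> \<exists>x\<in>S. x \<notin> F"
  by (meson finite_subset subsetI)

lemma inf_e2: "inj e \<Longrightarrow> infinite (e ` {2::nat..})"
proof
  assume "inj e" "finite (e ` {2::nat..})"
  hence "finite {2::nat..}" using finite_imageD inj_on_subset by blast
  moreover have "UNIV = {..<2::nat} \<union> {2..}" by auto
  ultimately show False using infinite_UNIV_nat by (metis finite_Un finite_lessThan)
qed

definition goodYX :: "(nat\<Rightarrow>'a) \<Rightarrow> 'a set \<Rightarrow> ('v\<Rightarrow>'a) \<Rightarrow> ('v\<Rightarrow>'a) \<Rightarrow> 'v set \<Rightarrow> bool" where
 "goodYX e W s t V \<longleftrightarrow> (\<forall>u\<in>V. \<forall>w\<in>V. s u = s w \<longleftrightarrow> t u = t w) \<and>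
    (\<forall>u\<in>V. s u \<in> W \<and> t u \<in> W \<and> (s u \<notin> range e \<longrightarrow> t u \<in> e ` {2..}))"

definition goodXY :: "(nat\<Rightarrow>'a) \<Rightarrow> 'a set \<Rightarrow> ('v\<Rightarrow>'a) \<Rightarrow> ('v\<Rightarrow>'a) \<Rightarrow> 'v set \<Rightarrow> bool" where
 "goodXY e W t s V \<longleftrightarrow> (\<forall>u\<in>V. \<forall>w\<in>V. t u = t w \<longleftrightarrow> s u = s w) \<and>
    (\<forall>u\<in>V. t u \<in> W \<and> s u \<in> W \<and> (t u \<in> range e \<longrightarrow> s u \<notin> range e))"

lemma goodYX_new: "goodYX e W s t V \<Longrightarrow> b \<in> W \<Longrightarrow> a \<in> W \<Longrightarrow> (\<forall>u\<in>V-{i}. s u \<noteq> b)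
  \<Longrightarrow> (\<forall>u\<in>V-{i}. t u \<noteq> a) \<Longrightarrow> (b \<notin> range e \<longrightarrow> a \<in> e ` {2..}) \<Longrightarrow>
  goodYX e W (s(i:=b)) (t(i:=a)) (insert i V)"
  unfolding goodYX_def
  apply (intro conjI ballI)
  subgoal for u w by (cases "u = i"; cases "w = i") auto
  subgoal for u by (cases "u = i") auto
  subgoal for u by (cases "u = i") auto
  subgoal for u by (cases "u = i") auto
  done

lemma goodYX_old: "goodYX e W s t V \<Longrightarrow> u \<in> V \<Longrightarrow>
  goodYX e W (s(i:=s u)) (t(i:=t u)) (insert i V)"
  unfolding goodYX_def
  apply (intro conjI ballI)
  subgoal for v w by (cases "v = i"; cases "w = i") auto
  subgoal for v by (cases "v = i") auto
  subgoal for v by (cases "v = i") auto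
  subgoal for v by (cases "v = i") auto
  done

lemma goodXY_new: "goodXY e W t s V \<Longrightarrow> b \<in> W \<Longrightarrow> a \<in> W \<Longrightarrow> (\<forall>u\<in>V-{i}. s u \<noteq> b)
  \<Longrightarrow> (\<forall>u\<in>V-{i}. t u \<noteq> a) \<Longrightarrow> (a \<in> range e \<longrightarrow> b \<notin> range e) \<Longrightarrow>
  goodXY e W (t(i:=a)) (s(i:=b)) (insert i V)"
  unfolding goodXY_def
  apply (intro conjI ballI)
  subgoal for u w by (cases "u = i"; cases "w = i") auto
  subgoal for u by (cases "u = i") auto
  subgoal for u by (cases "u = i") auto
  subgoal for u by (cases "u = i") auto
  done

lemma goodXY_old: "goodXY e W t s V \<Longrightarrow> u \<in> V \<Longrightarrow>
  goodXY e W (t(i:=t u)) (s(i:=s u)) (insert i V)"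
  unfolding goodXY_def
  apply (intro conjI ballI)
  subgoal for v w by (cases "v = i"; cases "w = i") auto
  subgoal for v by (cases "v = i") auto
  subgoal for v by (cases "v = i") auto
  subgoal for v by (cases "v = i") auto
  done

lemma YX:
  fixes \<phi> :: "('v,'i) pfm"
  assumes e: "inj e" "range e \<subseteq> W"
  shows "finite V \<Longrightarrow> pfm_fv \<phi> \<subseteq> V \<Longrightarrow> goodYX e W s t V \<Longrightarrow>
    pfm_sat W (sigma e W) s \<phi> \<Longrightarrow> pfm_sat W (rho e W) t \<phi>"
proof (induction \<phi> arbitrary: V s t)
  case (PEq i j) thus ?case by (auto simp: goodYX_def)
next
  case (PNeq i j) thus ?case by (auto simp: goodYX_def)
next
  case (PRel i j) thus ?case by (auto simp: goodYX_def rho_def sigma_def)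
next
  case (PAll i p)
  show ?case unfolding pfm_sat.simps
  proof
    fix a assume a: "a \<in> W"
    obtain b where b: "b \<in> W" and g: "goodYX e W (s(i:=b)) (t(i:=a)) (insert i V)"
    proof (cases "\<exists>u\<in>V-{i}. t u = a")
      case True
      then obtain u where u: "u \<in> V-{i}" "t u = a" by blast
      show ?thesis
        apply (rule that[of "s u"])
        using PAll.prems(3) u unfolding goodYX_def by auto
    next
      case False
      have "infinite (range e)" using e(1) finite_imageD infinite_UNIV_nat by blast
      then obtain b where "b \<in> range e" "b \<notin> s ` (V-{i})"
        using fresh[of "range e" "s ` (V-{i})"] PAll.prems(1) by blast
      then show ?thesis
        apply -
        apply (rule that[of b])
         apply (use e(2) in blast)
        apply (rule goodYX_new[OF PAll.prems(3)])
        using False e(2) a \<open>b \<in> range e\<close> \<open>b \<notin> s ` (V-{i})\<close> by blast+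
    qed
    have h: "pfm_sat W (sigma e W) (s(i:=b)) p" using PAll.prems(4) b by simp
    show "pfm_sat W (rho e W) (t(i:=a)) p"
      by (rule PAll.IH[of "insert i V" "s(i:=b)" "t(i:=a)", OF _ _ g h])
         (use PAll.prems(1,2) in auto)
  qed
next
  case (PEx i p)
  from PEx.prems(4) obtain b where b: "b \<in> W" "pfm_sat W (sigma e W) (s(i:=b)) p" by auto
  obtain a where a: "a \<in> W" and g: "goodYX e W (s(i:=b)) (t(i:=a)) (insert i V)"
  proof (cases "\<exists>u\<in>V-{i}. s u = b")
    case True
    then obtain u where u: "u \<in> V-{i}" "s u = b" by blast
    show ?thesis
      apply (rule that[of "t u"])
      using PEx.prems(3) u unfolding goodYX_def by auto
  next
    case False
    obtain a where "a \<in> e ` {2..}" "a \<notin> t ` (V-{i})"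
      using fresh[of "e ` {2..}" "t ` (V-{i})"] PEx.prems(1) inf_e2[OF e(1)] by blast
    then show ?thesis
      apply -
      apply (rule that[of a])
       apply (use e(2) in blast)
      apply (rule goodYX_new[OF PEx.prems(3)])
      using False e(2) b(1) \<open>a \<in> e ` {2..}\<close> \<open>a \<notin> t ` (V-{i})\<close> by blast+
  qed
  have "pfm_sat W (rho e W) (t(i:=a)) p"
    by (rule PEx.IH[of "insert i V" "s(i:=b)" "t(i:=a)", OF _ _ g b(2)])
       (use PEx.prems(1,2) in auto)
  then show ?case using a by auto
next
  case (PConj I f)
  show ?case unfolding pfm_sat.simps
  proof
    fix k assume k: "k \<in> I"
    show "pfm_sat W (rho e W) t (f k)"
      using PConj.IH[OF rangeI[of f k], of V s t] PConj.prems k by auto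
  qed
next
  case (PDisj I f)
  then obtain k where k: "k \<in> I" "pfm_sat W (sigma e W) s (f k)" by auto
  have "pfm_sat W (rho e W) t (f k)"
    using PDisj.IH[OF rangeI[of f k], of V s t] PDisj.prems k by auto
  then show ?case using k by auto
qed

lemma XY:
  fixes \<phi> :: "('v,'i) pfm"
  assumes e: "inj e" "range e \<subseteq> W" and inf: "infinite (W - range e)"
  shows "finite V \<Longrightarrow> pfm_fv \<phi> \<subseteq> V \<Longrightarrow> goodXY e W t s V \<Longrightarrow>
    pfm_sat W (rho e W) t \<phi> \<Longrightarrow> pfm_sat W (sigma e W) s \<phi>"
proof (induction \<phi> arbitrary: V s t)
  case (PEq i j) thus ?case by (auto simp: goodXY_def)
next
  case (PNeq i j) thus ?case by (auto simp: goodXY_def)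
next
  case (PRel i j) thus ?case by (auto simp: goodXY_def rho_def sigma_def)
next
  case (PAll i p)
  show ?case unfolding pfm_sat.simps
  proof
    fix b assume b: "b \<in> W"
    obtain a where a: "a \<in> W" and g: "goodXY e W (t(i:=a)) (s(i:=b)) (insert i V)"
    proof (cases "\<exists>u\<in>V-{i}. s u = b")
      case True
      then obtain u where u: "u \<in> V-{i}" "s u = b" by blast
      show ?thesis
        apply (rule that[of "t u"])
        using PAll.prems(3) u unfolding goodXY_def by auto
    next
      case False
      obtain a where "a \<in> W - range e" "a \<notin> t ` (V-{i})"
        using fresh[OF inf, of "t ` (V-{i})"] PAll.prems(1) by blast
      then show ?thesis
        apply -
        apply (rule that[of a])
         apply blast
        apply (rule goodXY_new[OF PAll.prems(3)])
        using False b \<open>a \<in> W - range e\<close> \<open>a \<notin> t ` (V-{i})\<close> by blast+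
    qed
    have h: "pfm_sat W (rho e W) (t(i:=a)) p" using PAll.prems(4) a by simp
    have fv: "pfm_fv p \<subseteq> insert i V" using PAll.prems(2) by auto
    show "pfm_sat W (sigma e W) (s(i:=b)) p"
      by (rule PAll.IH[of "insert i V" "t(i:=a)" "s(i:=b)", OF _ fv g h])
         (use PAll.prems(1) in auto)
  qed
next
  case (PEx i p)
  from PEx.prems(4) obtain a where a: "a \<in> W" "pfm_sat W (rho e W) (t(i:=a)) p" by auto
  obtain b where b: "b \<in> W" and g: "goodXY e W (t(i:=a)) (s(i:=b)) (insert i V)"
  proof (cases "\<exists>u\<in>V-{i}. t u = a")
    case True
    then obtain u where u: "u \<in> V-{i}" "t u = a" by blast
    show ?thesis
      apply (rule that[of "s u"])
      using PEx.prems(3) u unfolding goodXY_def by auto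
  next
    case False
    obtain b where "b \<in> W - range e" "b \<notin> s ` (V-{i})"
      using fresh[OF inf, of "s ` (V-{i})"] PEx.prems(1) by blast
    then show ?thesis
      apply -
      apply (rule that[of b])
       apply blast
      apply (rule goodXY_new[OF PEx.prems(3)])
      using False a \<open>b \<in> W - range e\<close> \<open>b \<notin> s ` (V-{i})\<close> by blast+
  qed
  have "pfm_sat W (sigma e W) (s(i:=b)) p"
    by (rule PEx.IH[of "insert i V" "t(i:=a)" "s(i:=b)", OF _ _ g a(2)])
       (use PEx.prems(1,2) in auto)
  then show ?case using b by auto
next
  case (PConj I f)
  show ?case unfolding pfm_sat.simps
  proof
    fix k assume k: "k \<in> I"
    show "pfm_sat W (sigma e W) s (f k)"
      using PConj.IH[OF rangeI[of f k], of V t s] PConj.prems k by auto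
  qed
next
  case (PDisj I f)
  then obtain k where k: "k \<in> I" "pfm_sat W (rho e W) t (f k)" by auto
  have "pfm_sat W (sigma e W) s (f k)"
    using PDisj.IH[OF rangeI[of f k], of V t s] PDisj.prems k by auto
  then show ?case using k by auto
qed

theorem mainTheorem17:
  fixes W :: "'a set" and e :: "nat \<Rightarrow> 'a"
  assumes "(card_of W, cardSuc (card_of (UNIV :: nat set))) \<in> ordIso"
    and "inj e" and "range e \<subseteq> W"
  shows "pinf_equiv TYPE('v) TYPE('i) W (rho e W) W (sigma e W)
         \<and> \<not> elem_equiv W (rho e W) W (sigma e W)
         \<and> \<not> bicondensable W (rho e W) W (sigma e W)"
proof -
  note e = assms(2,3)
  have unc: "\<not> countable W" by (rule uncountable_W[OF assms(1)])
  have unc2: "\<not> countable (W - range e)"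
  proof
    assume "countable (W - range e)"
    hence "countable ((W - range e) \<union> range e)" by blast
    moreover have "(W - range e) \<union> range e = W" using e(2) by blast
    ultimately show False using unc by simp
  qed
  hence inf: "infinite (W - range e)" using countable_finite by blast
  have e0: "e 0 \<in> W" using e(2) by blast
  have P1: "pinf_equiv TYPE('v) TYPE('i) W (rho e W) W (sigma e W)"
    unfolding pinf_equiv_def
  proof (intro allI impI iffI)
    fix p :: "('v,'i) pfm" assume fv: "pfm_fv p = {}"
    { assume m: "pfm_models W (rho e W) p"
      show "pfm_models W (sigma e W) p" unfolding pfm_models_def
      proof (intro allI impI)
        fix s :: "'v \<Rightarrow> 'a" assume "range s \<subseteq> W"
        have "pfm_sat W (rho e W) (\<lambda>_. e 0) p" using m e0 unfolding pfm_models_def by auto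
        then show "pfm_sat W (sigma e W) s p"
          using XY[OF e inf, of "{}" p "\<lambda>_. e 0" s] fv by (simp add: goodXY_def)
      qed }
    { assume m: "pfm_models W (sigma e W) p"
      show "pfm_models W (rho e W) p" unfolding pfm_models_def
      proof (intro allI impI)
        fix t :: "'v \<Rightarrow> 'a" assume "range t \<subseteq> W"
        have "pfm_sat W (sigma e W) (\<lambda>_. e 0) p" using m e0 unfolding pfm_models_def by auto
        then show "pfm_sat W (rho e W) t p"
          using YX[OF e, of "{}" p "\<lambda>_. e 0" t] fv by (simp add: goodYX_def)
      qed }
  qed
  define \<phi> where "\<phi> = FEx 0 (FEx 1 (FAnd (FNot (FEq 0 1)) (FAnd (FRel 0 1)
     (FNot (FEx 2 (FAnd (FRel 0 2) (FAnd (FNot (FEq 2 0)) (FNot (FEq 2 1)))))))))"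
  have fv\<phi>: "fo_fv \<phi> = {}" unfolding \<phi>_def by auto
  have e01: "e 0 \<noteq> e 1" using e(1) by (metis inj_eq zero_neq_one)
  have e1: "e 1 \<in> W" using e(2) by blast
  have X\<phi>: "fo_models W (rho e W) \<phi>"
    unfolding fo_models_def
  proof (intro allI impI)
    fix s :: "nat \<Rightarrow> 'a"
    have r01: "rho e W (e 0) (e 1)" using e0 e1 unfolding rho_def by auto
    have nc: "\<not> (\<exists>c\<in>W. rho e W (e 0) c \<and> c \<noteq> e 0 \<and> c \<noteq> e 1)"
    proof
      assume "\<exists>c\<in>W. rho e W (e 0) c \<and> c \<noteq> e 0 \<and> c \<noteq> e 1"
      then obtain c where c: "rho e W (e 0) c" "c \<noteq> e 0" "c \<noteq> e 1" by blast
      have "e 0 \<notin> e ` {2..}" using e(1) by (auto simp: inj_eq)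
      hence "c \<in> e ` {0,1}" using c(1,2) unfolding rho_def by auto
      thus False using c by auto
    qed
    show "fo_sat W (rho e W) s \<phi>" unfolding \<phi>_def
      using e0 e1 e01 r01 nc by auto
  qed
  have Y\<phi>: "\<not> fo_models W (sigma e W) \<phi>"
  proof
    assume "fo_models W (sigma e W) \<phi>"
    hence "fo_sat W (sigma e W) (\<lambda>_. e 0) \<phi>" using e0 unfolding fo_models_def by auto
    then obtain a b where ab: "a \<in> W" "b \<in> W" "a \<noteq> b" "sigma e W a b"
      and nc: "\<not> (\<exists>c\<in>W. sigma e W a c \<and> c \<noteq> a \<and> c \<noteq> b)"
      unfolding \<phi>_def by auto
    have "a \<in> W - range e" using ab unfolding sigma_def by auto
    moreover obtain c where "c \<in> W - range e" "c \<notin> {a,b}" using fresh[OF inf, of "{a,b}"] by blast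
    ultimately show False using nc unfolding sigma_def by auto
  qed
  have P2: "\<not> elem_equiv W (rho e W) W (sigma e W)"
    unfolding elem_equiv_def using fv\<phi> X\<phi> Y\<phi> by blast
  have P3: "\<not> condensable W (sigma e W) W (rho e W)"
  proof
    assume "condensable W (sigma e W) W (rho e W)"
    then obtain F where F: "bij_betw F W W" "\<forall>x\<in>W. \<forall>x'\<in>W. sigma e W x x' \<longrightarrow> rho e W (F x) (F x')"
      unfolding condensable_def condensation_def by blast
    obtain x0 where x0: "x0 \<in> W - range e" using inf by (metis finite.emptyI ex_in_conv)
    have "F ` (W - range e) \<subseteq> insert (F x0) (range e)"
    proof
      fix y assume "y \<in> F ` (W - range e)"
      then obtain x where x: "x \<in> W - range e" "y = F x" by blast
      have "sigma e W x0 x" using x x0 unfolding sigma_def by auto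
      hence "rho e W (F x0) (F x)" using F(2) x x0 by blast
      thus "y \<in> insert (F x0) (range e)" using x unfolding rho_def by auto
    qed
    hence "countable (F ` (W - range e))" by (rule countable_subset) simp
    moreover have "inj_on F (W - range e)" using F(1) unfolding bij_betw_def by (meson Diff_subset inj_on_subset)
    ultimately show False using countable_image_inj_on unc2 by blast
  qed
  show ?thesis using P1 P2 P3 unfolding bicondensable_def by blast
qed

end
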